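(* Let $\alpha\in(0,1)$, $R>0$, and consider the initial state $(x_O,y_O,y_T)$ at time $0$ of the observer–target system. Let $m=\sqrt{1-\alpha^2}/\alpha$ and let $W=(x_O,y_O-R)$ be the bottom point of the observation disk. If $W$ lies on or above the Decision Line, i.e. $y_O-R-y_T\ge m|x_O|$, then the optimal observation time equals $\frac{2R}{1-\alpha}$ (the state belongs to $\mathscr B_3$).
   Context: Target: position $(0,y_T(t))$, $\dot y_T=1$, $y_T(0)=y_T$. Observer: position $(x_O(t),y_O(t))$ starting at $(x_O,y_O)$, $\dot x_O=\alpha\cos\psi(t)$, $\dot y_O=\alpha\sin\psi(t)$, heading $\psi:[0,\infty)\to\mathbb R$ a measurable control. Observation disk: closed disk of radius $R$ centered at the observer. For a control, $t_2=\inf\{t\ge0:x_O(t)^2+(y_O(t)-y_T(t))^2\le R^2\}$ (contact time), $t_f=\inf\{t\ge t_2:x_O(t)^2+(y_O(t)-y_T(t))^2>R^2\}$, and the observation time is $t_{\text{obs}}=t_f-t_2$ (taken to be $0$ if no contact occurs). The optimal observation time is the supremum of $t_{\text{obs}}$ over all controls. The Decision Line is the union of the two rays $\{(\pm s\alpha,\,y_T+s\sqrt{1-\alpha^2}):s\ge0\}$ from the initial target position, i.e. the set of points $Z$ whose Apollonius circle $\{P:|PZ|=\alpha|PT|\}$ with the target $T$ is tangent to the target's path; "on or above" it means in the region $\{(x,y):y-y_T\ge m|x|\}$. $\mathscr B_3$ denotes the set of states whose optimal observation time equals $2R/(1-\alpha)$. *)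

theory Defs
  imports "HOL-Analysis.Analysis"
begin

text \<open>Observer-target pursuit/observation model. Target at (0, yT + t), observer with
  speed alpha and measurable heading psi. Observer coordinates at time t:\<close>

definition obs_x :: "real \<Rightarrow> real \<Rightarrow> (real \<Rightarrow> real) \<Rightarrow> real \<Rightarrow> real" where
  "obs_x \<alpha> xO \<psi> t = xO + integral {0..t} (\<lambda>s. \<alpha> * cos (\<psi> s))"

definition obs_y :: "real \<Rightarrow> real \<Rightarrow> (real \<Rightarrow> real) \<Rightarrow> real \<Rightarrow> real" where
  "obs_y \<alpha> yO \<psi> t = yO + integral {0..t} (\<lambda>s. \<alpha> * sin (\<psi> s))"

definition sep2 :: "real \<Rightarrow> real \<Rightarrow> real \<Rightarrow> real \<Rightarrow> (real \<Rightarrow> real) \<Rightarrow> real \<Rightarrow> real" where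
  "sep2 \<alpha> xO yO yT \<psi> t = (obs_x \<alpha> xO \<psi> t)\<^sup>2 + (obs_y \<alpha> yO \<psi> t - (yT + t))\<^sup>2"

definition contact_set :: "real \<Rightarrow> real \<Rightarrow> real \<Rightarrow> real \<Rightarrow> real \<Rightarrow> (real \<Rightarrow> real) \<Rightarrow> real set" where
  "contact_set \<alpha> R xO yO yT \<psi> = {t. 0 \<le> t \<and> sep2 \<alpha> xO yO yT \<psi> t \<le> R\<^sup>2}"

definition contact_time :: "real \<Rightarrow> real \<Rightarrow> real \<Rightarrow> real \<Rightarrow> real \<Rightarrow> (real \<Rightarrow> real) \<Rightarrow> real" where
  "contact_time \<alpha> R xO yO yT \<psi> = Inf (contact_set \<alpha> R xO yO yT \<psi>)"

definition exit_set :: "real \<Rightarrow> real \<Rightarrow> real \<Rightarrow> real \<Rightarrow> real \<Rightarrow> (real \<Rightarrow> real) \<Rightarrow> real set" where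
  "exit_set \<alpha> R xO yO yT \<psi> =
     {t. contact_time \<alpha> R xO yO yT \<psi> \<le> t \<and> sep2 \<alpha> xO yO yT \<psi> t > R\<^sup>2}"

definition exit_time :: "real \<Rightarrow> real \<Rightarrow> real \<Rightarrow> real \<Rightarrow> real \<Rightarrow> (real \<Rightarrow> real) \<Rightarrow> real" where
  "exit_time \<alpha> R xO yO yT \<psi> = Inf (exit_set \<alpha> R xO yO yT \<psi>)"

text \<open>Observation time tf - t2 (0 if no contact; \<infinity> if the target is never lost,
  which cannot happen for alpha < 1 but keeps the definition total).\<close>
definition obs_time :: "real \<Rightarrow> real \<Rightarrow> real \<Rightarrow> real \<Rightarrow> real \<Rightarrow> (real \<Rightarrow> real) \<Rightarrow> ereal" where
  "obs_time \<alpha> R xO yO yT \<psi> =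
     (if contact_set \<alpha> R xO yO yT \<psi> = {} then 0
      else if exit_set \<alpha> R xO yO yT \<psi> = {} then \<infinity>
      else ereal (exit_time \<alpha> R xO yO yT \<psi> - contact_time \<alpha> R xO yO yT \<psi>))"

definition opt_obs_time :: "real \<Rightarrow> real \<Rightarrow> real \<Rightarrow> real \<Rightarrow> real \<Rightarrow> ereal" where
  "opt_obs_time \<alpha> R xO yO yT =
     (SUP \<psi> \<in> {\<psi>. \<psi> \<in> borel_measurable lborel}. obs_time \<alpha> R xO yO yT \<psi>)"

end

theory Submission
  imports Defs
begin

lemma integ_bdd:
  fixes g :: "real \<Rightarrow> real"
  assumes "g \<in> borel_measurable lborel" "\<And>x. \<bar>g x\<bar> \<le> B"
  shows "g integrable_on {a..b}"
proof -
  have "integrable lborel (\<lambda>x. indicator {a..b} x *\<^sub>R g x)"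
    by (rule integrableI_bounded_set_indicator[where B=B]) (use assms in \<open>auto simp: emeasure_lborel_Icc_eq\<close>)
  then have "set_integrable lborel {a..b} g" by (simp add: set_integrable_def)
  then show ?thesis by (rule set_borel_integral_eq_integral(1))
qed

lemma cont_sin: "continuous_on UNIV (sin::real\<Rightarrow>real)"
  by (rule continuous_at_imp_continuous_on) auto

lemma meas_sin: fixes \<psi> :: "real \<Rightarrow> real" and \<alpha> :: real assumes "\<psi> \<in> borel_measurable lborel"
  shows "(\<lambda>s. \<alpha> * sin (\<psi> s)) \<in> borel_measurable lborel"
  by (rule measurable_compose[OF assms, of "\<lambda>x. \<alpha> * sin x"], rule borel_measurable_continuous_onI,
      intro continuous_on_mult_left cont_sin)

lemma ry_decr:
  fixes \<alpha> :: real
  assumes psi: "\<psi> \<in> borel_measurable lborel" and a: "0 \<le> \<alpha>" and ts: "0 \<le> t" "t \<le> s"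
  shows "obs_y \<alpha> yO \<psi> s - (yT + s) \<le> obs_y \<alpha> yO \<psi> t - (yT + t) - (1 - \<alpha>) * (s - t)"
proof -
  let ?g = "\<lambda>s. \<alpha> * sin (\<psi> s)"
  have bd: "\<And>x. \<bar>?g x\<bar> \<le> \<alpha>" using a by (simp add: abs_mult mult_left_le)
  have int: "?g integrable_on {a..b}" for a b by (rule integ_bdd[OF meas_sin[OF psi] bd])
  have comb: "integral {0..t} ?g + integral {t..s} ?g = integral {0..s} ?g"
    by (rule Henstock_Kurzweil_Integration.integral_combine[OF ts int])
  have "integral {t..s} ?g \<le> integral {t..s} (\<lambda>_. \<alpha>)"
    by (rule integral_le[OF int]) (use a in \<open>auto intro!: mult_left_le\<close>)
  also have "\<dots> = \<alpha> * (s - t)" using ts by simp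
  finally show ?thesis using comb unfolding obs_y_def by (simp add: algebra_simps)
qed

lemma upper:
  fixes \<alpha> R :: real
  assumes psi: "\<psi> \<in> borel_measurable lborel" and a: "0 < \<alpha>" "\<alpha> < 1" and R: "0 < R"
  shows "obs_time \<alpha> R xO yO yT \<psi> \<le> ereal (2 * R / (1 - \<alpha>))"
proof -
  define T where "T = 2 * R / (1 - \<alpha>)"
  have T: "(1 - \<alpha>) * T = 2 * R" "T > 0" using a R by (auto simp: T_def)
  let ?C = "contact_set \<alpha> R xO yO yT \<psi>"
  let ?E = "exit_set \<alpha> R xO yO yT \<psi>"
  let ?c = "contact_time \<alpha> R xO yO yT \<psi>"
  let ?ry = "\<lambda>t. obs_y \<alpha> yO \<psi> t - (yT + t)"
  show ?thesis
  proof (cases "?C = {}")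
    case True then show ?thesis using T by (simp add: obs_time_def T_def)
  next
    case Cne: False
    have bddC: "bdd_below ?C" unfolding contact_set_def by (rule bdd_belowI[of _ 0]) auto
    have key: "s \<in> ?E" if t: "t \<in> ?C" and s: "s > t + T" for t s
    proof -
      have t0: "0 \<le> t" and st: "sep2 \<alpha> xO yO yT \<psi> t \<le> R\<^sup>2" using t by (auto simp: contact_set_def)
      have "0 \<le> (obs_x \<alpha> xO \<psi> t)\<^sup>2" by simp
      then have "(?ry t)\<^sup>2 \<le> R\<^sup>2" using st unfolding sep2_def by linarith
      then have "\<bar>?ry t\<bar> \<le> \<bar>R\<bar>" by (simp only: abs_le_square_iff)
      then have ryt: "?ry t \<le> R" using R by linarith
      have "?ry s \<le> ?ry t - (1 - \<alpha>) * (s - t)"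
        by (rule ry_decr[OF psi]) (use a t0 s T in auto)
      moreover have "(1 - \<alpha>) * (s - t) > (1 - \<alpha>) * T" using s a by (intro mult_strict_left_mono) auto
      ultimately have "?ry s < - R" using ryt T by linarith
      then have "R\<^sup>2 < (- ?ry s)\<^sup>2" using R by (intro power_strict_mono) auto
      then have "R\<^sup>2 < (?ry s)\<^sup>2" unfolding power2_minus .
      also have "\<dots> \<le> sep2 \<alpha> xO yO yT \<psi> s" unfolding sep2_def by simp
      finally have "R\<^sup>2 < sep2 \<alpha> xO yO yT \<psi> s" .
      moreover have "?c \<le> s" using cInf_lower[OF t bddC] s T unfolding contact_time_def by linarith
      ultimately show ?thesis unfolding exit_set_def by simp
    qed
    obtain t0 where t0: "t0 \<in> ?C" using Cne by blast
    have Ene: "?E \<noteq> {}" using key[OF t0, of "t0 + T + 1"] by auto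
    have bddE: "bdd_below ?E" unfolding exit_set_def by (rule bdd_belowI[of _ ?c]) auto
    have ext: "exit_time \<alpha> R xO yO yT \<psi> \<le> t + T" if t: "t \<in> ?C" for t
    proof (rule field_le_epsilon)
      fix e :: real assume "0 < e"
      then have "t + T + e \<in> ?E" by (intro key[OF t]) auto
      then show "exit_time \<alpha> R xO yO yT \<psi> \<le> t + T + e"
        unfolding exit_time_def by (rule cInf_lower[OF _ bddE])
    qed
    have "exit_time \<alpha> R xO yO yT \<psi> \<le> ?c + T"
    proof (rule field_le_epsilon)
      fix e :: real assume e: "0 < e"
      have "Inf ?C < ?c + e" using e unfolding contact_time_def by simp
      then obtain t where t: "t \<in> ?C" "t < ?c + e" using cInf_lessD[OF Cne] by blast
      show "exit_time \<alpha> R xO yO yT \<psi> \<le> ?c + T + e" using ext[OF t(1)] t(2) by linarith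
    qed
    then show ?thesis using Cne Ene by (simp add: obs_time_def T_def)
  qed
qed

lemma step_int:
  fixes a b t t2 :: real
  assumes "0 \<le> t" "0 \<le> t2"
  shows "integral {0..t} (\<lambda>s. if s \<le> t2 then a else b) = (if t \<le> t2 then a*t else a*t2 + b*(t-t2))"
proof (cases "t \<le> t2")
  case True
  have "integral {0..t} (\<lambda>s. if s \<le> t2 then a else b) = integral {0..t} (\<lambda>s. a)"
    by (rule integral_cong) (use True in auto)
  then show ?thesis using True assms by simp
next
  case False
  have h1: "((\<lambda>s. if s \<le> t2 then a else b) has_integral (a * t2)) {0..t2}"
  proof -
    have c: "((\<lambda>s. a) has_integral (a * t2)) {0..t2}" using has_integral_const_real[of a 0 t2] assms by (simp add: mult.commute)
    show ?thesis by (rule has_integral_spike_finite[where S="{t2}", OF _ _ c]) auto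
  qed
  have h2: "((\<lambda>s. if s \<le> t2 then a else b) has_integral (b * (t - t2))) {t2..t}"
  proof -
    have c: "((\<lambda>s. b) has_integral (b * (t - t2))) {t2..t}" using has_integral_const_real[of b t2 t] False by (simp add: mult.commute)
    show ?thesis by (rule has_integral_spike_finite[where S="{t2}", OF _ _ c]) auto
  qed
  have "((\<lambda>s. if s \<le> t2 then a else b) has_integral (a * t2 + b * (t - t2))) {0..t}"
    by (rule has_integral_combine[OF assms(2) _ h1 h2]) (use False in auto)
  then show ?thesis using False by (simp add: integral_unique)
qed

lemma lower:
  fixes \<alpha> R t2 \<theta> xO yO yT :: real
  assumes a: "0 < \<alpha>" "\<alpha> < 1" and R: "0 < R" and t2: "0 \<le> t2"
    and ex: "\<alpha> * t2 * cos \<theta> = - xO" and ey: "\<alpha> * t2 * sin \<theta> = t2 - (yO - R - yT)"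
  shows "obs_time \<alpha> R xO yO yT (\<lambda>s. if s \<le> t2 then \<theta> else pi/2) = ereal (2 * R / (1 - \<alpha>))"
proof -
  define \<psi> where "\<psi> = (\<lambda>s::real. if s \<le> t2 then \<theta> else pi/2)"
  define T where "T = 2 * R / (1 - \<alpha>)"
  have T: "(1 - \<alpha>) * T = 2 * R" "T > 0" using a R by (auto simp: T_def)
  have cx: "(\<lambda>s. \<alpha> * cos (\<psi> s)) = (\<lambda>s. if s \<le> t2 then \<alpha> * cos \<theta> else 0)"
    by (auto simp: \<psi>_def)
  have cy: "(\<lambda>s. \<alpha> * sin (\<psi> s)) = (\<lambda>s. if s \<le> t2 then \<alpha> * sin \<theta> else \<alpha>)"
    by (auto simp: \<psi>_def)
  have sa: "\<alpha> * sin \<theta> \<le> \<alpha>" using a by simp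
  have S: "sep2 \<alpha> xO yO yT \<psi> t =
      (if t \<le> t2 then (xO + \<alpha> * cos \<theta> * t)\<^sup>2 + (R + (yO - R - yT) - t * (1 - \<alpha> * sin \<theta>))\<^sup>2
       else (R - (1 - \<alpha>) * (t - t2))\<^sup>2)" if "0 \<le> t" for t
  proof (cases "t \<le> t2")
    case True then show ?thesis using that t2
      unfolding sep2_def obs_x_def obs_y_def cx cy by (simp add: step_int algebra_simps)
  next
    case False
    have x: "obs_x \<alpha> xO \<psi> t = 0" using False that t2 ex
      unfolding obs_x_def cx by (simp add: step_int algebra_simps)
    have y: "obs_y \<alpha> yO \<psi> t - (yT + t) = R - (1 - \<alpha>) * (t - t2)" using False that t2 ey
      unfolding obs_y_def cy by (simp add: step_int algebra_simps)
    show ?thesis using False unfolding sep2_def x y by simp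
  qed
  let ?C = "contact_set \<alpha> R xO yO yT \<psi>"
  let ?E = "exit_set \<alpha> R xO yO yT \<psi>"
  have hq: "yO - R - yT = t2 * (1 - \<alpha> * sin \<theta>)" using ey by (simp add: algebra_simps)
  have "\<alpha> * sin \<theta> \<le> \<alpha>" by (rule mult_left_le) (use a in auto)
  then have pos: "1 - \<alpha> * sin \<theta> > 0" using a by linarith
  have t2C: "t2 \<in> ?C"
  proof -
    have "sep2 \<alpha> xO yO yT \<psi> t2 = R\<^sup>2" using S[OF t2] ex hq by (simp add: algebra_simps)
    then show ?thesis using t2 by (simp add: contact_set_def)
  qed
  have before: "sep2 \<alpha> xO yO yT \<psi> t > R\<^sup>2" if "0 \<le> t" "t < t2" for t
  proof -
    have "t * (1 - \<alpha> * sin \<theta>) < t2 * (1 - \<alpha> * sin \<theta>)" using that pos by simp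
    then have "R < R + (yO - R - yT) - t * (1 - \<alpha> * sin \<theta>)" using hq by linarith
    then have "R\<^sup>2 < (R + (yO - R - yT) - t * (1 - \<alpha> * sin \<theta>))\<^sup>2" using R by (intro power_strict_mono) auto
    moreover have "0 \<le> (xO + \<alpha> * cos \<theta> * t)\<^sup>2" by simp
    moreover have "sep2 \<alpha> xO yO yT \<psi> t = (xO + \<alpha> * cos \<theta> * t)\<^sup>2 + (R + (yO - R - yT) - t * (1 - \<alpha> * sin \<theta>))\<^sup>2"
      using S[OF that(1)] that by simp
    ultimately show ?thesis by linarith
  qed
  have ct: "contact_time \<alpha> R xO yO yT \<psi> = t2"
    unfolding contact_time_def
  proof (rule cInf_eq_minimum[OF t2C])
    fix x assume "x \<in> ?C"
    then show "t2 \<le> x" using before by (force simp: contact_set_def)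
  qed
  have E: "?E = {t2 + T<..}"
  proof (intro set_eqI iffI)
    fix t assume "t \<in> ?E"
    then have t: "t2 \<le> t" "R\<^sup>2 < sep2 \<alpha> xO yO yT \<psi> t" by (auto simp: exit_set_def ct)
    show "t \<in> {t2 + T<..}"
    proof (rule ccontr)
      assume "t \<notin> {t2 + T<..}"
      then have "t \<le> t2 + T" by simp
      then have "(1 - \<alpha>) * (t - t2) \<le> (1 - \<alpha>) * T" using a by (intro mult_left_mono) auto
      moreover have "0 \<le> (1 - \<alpha>) * (t - t2)" using a t by simp
      ultimately have "\<bar>R - (1 - \<alpha>) * (t - t2)\<bar> \<le> \<bar>R\<bar>" using T R by linarith
      then have sq: "(R - (1 - \<alpha>) * (t - t2))\<^sup>2 \<le> R\<^sup>2" by (simp add: abs_le_square_iff)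
      show False
      proof (cases "t = t2")
        case True then show False using t t2C by (simp add: contact_set_def)
      next
        case False
        then have "sep2 \<alpha> xO yO yT \<psi> t = (R - (1 - \<alpha>) * (t - t2))\<^sup>2"
          using S[of t] t t2 by simp
        then show False using t sq by linarith
      qed
    qed
  next
    fix t assume "t \<in> {t2 + T<..}"
    then have t: "t > t2 + T" by simp
    then have "(1 - \<alpha>) * (t - t2) > (1 - \<alpha>) * T" using a by (intro mult_strict_left_mono) auto
    then have "R - (1 - \<alpha>) * (t - t2) < - R" using T by linarith
    then have "R\<^sup>2 < (- (R - (1 - \<alpha>) * (t - t2)))\<^sup>2" using R by (intro power_strict_mono) auto
    then have "R\<^sup>2 < (R - (1 - \<alpha>) * (t - t2))\<^sup>2" unfolding power2_minus .
    then show "t \<in> ?E" using S[of t] t t2 T by (auto simp: exit_set_def ct)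
  qed
  have "?C \<noteq> {}" using t2C by blast
  moreover have "?E \<noteq> {}" unfolding E by simp
  ultimately show ?thesis
    by (simp add: obs_time_def exit_time_def E ct T_def \<psi>_def[symmetric])
qed

theorem lemma7:
  fixes \<alpha> R xO yO yT m :: real
  assumes "0 < \<alpha>" and "\<alpha> < 1" and "0 < R"
    and "m = sqrt (1 - \<alpha>\<^sup>2) / \<alpha>"
    and "yO - R - yT \<ge> m * \<bar>xO\<bar>"
  shows "opt_obs_time \<alpha> R xO yO yT = ereal (2 * R / (1 - \<alpha>))"
proof -
  note a = assms(1,2) and R = assms(3)
  define h where "h = yO - R - yT"
  define k where "k = 1 - \<alpha>\<^sup>2"
  have "\<alpha> * \<alpha> < 1 * 1" by (rule mult_strict_mono) (use a in auto)
  then have k: "0 < k" unfolding k_def by (simp add: power2_eq_square)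
  have sk: "0 \<le> sqrt k" using k by simp
  have m0: "0 \<le> m" using assms(4) a k_def k by simp
  have "0 \<le> m * \<bar>xO\<bar>" using m0 by simp
  then have h0: "0 \<le> h" using assms(5) unfolding h_def by linarith
  have ah: "sqrt k * \<bar>xO\<bar> \<le> \<alpha> * h"
  proof -
    have "m * \<bar>xO\<bar> \<le> h" using assms(5) h_def by simp
    then have "\<alpha> * (m * \<bar>xO\<bar>) \<le> \<alpha> * h" using a by (intro mult_left_mono) auto
    moreover have "\<alpha> * (m * \<bar>xO\<bar>) = sqrt k * \<bar>xO\<bar>" using a by (simp add: assms(4) k_def)
    ultimately show ?thesis by simp
  qed
  have disc: "k * xO\<^sup>2 \<le> (\<alpha> * h)\<^sup>2"
  proof -
    have "(sqrt k * \<bar>xO\<bar>)\<^sup>2 \<le> (\<alpha> * h)\<^sup>2" using ah sk by (intro power_mono) auto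
    moreover have "(sqrt k * \<bar>xO\<bar>)\<^sup>2 = k * xO\<^sup>2" using k by (simp add: power_mult_distrib)
    ultimately show ?thesis by linarith
  qed
  define r where "r = sqrt ((\<alpha> * h)\<^sup>2 - k * xO\<^sup>2)"
  have r0: "0 \<le> r" unfolding r_def using disc by simp
  have r2: "r\<^sup>2 = (\<alpha> * h)\<^sup>2 - k * xO\<^sup>2" unfolding r_def using disc by simp
  have rle: "r \<le> \<alpha> * h"
  proof -
    have "r \<le> sqrt ((\<alpha> * h)\<^sup>2)" unfolding r_def using k by (intro real_sqrt_le_mono) simp
    also have "\<dots> = \<alpha> * h" using a h0 by simp
    finally show ?thesis .
  qed
  define t2 where "t2 = (h - r) / k"
  have kt2: "k * t2 = h - r" using k unfolding t2_def by simp
  have t2: "0 \<le> t2"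
  proof -
    have "\<alpha> * h \<le> h" using a h0 by (simp add: mult_left_le_one_le)
    then show ?thesis unfolding t2_def using k rle by simp
  qed
  have Q: "xO\<^sup>2 + (t2 - h)\<^sup>2 = \<alpha>\<^sup>2 * t2\<^sup>2"
  proof -
    have e1: "xO\<^sup>2 + (t2 - h)\<^sup>2 - \<alpha>\<^sup>2 * t2\<^sup>2 = xO\<^sup>2 + k * t2\<^sup>2 - 2 * h * t2 + h\<^sup>2"
      unfolding k_def by (simp add: power2_eq_square algebra_simps)
    have "k * (xO\<^sup>2 + k * t2\<^sup>2 - 2 * h * t2 + h\<^sup>2) = k * xO\<^sup>2 + (k * t2)\<^sup>2 - 2 * h * (k * t2) + k * h\<^sup>2"
      by (simp add: power2_eq_square algebra_simps)
    also have "\<dots> = k * xO\<^sup>2 + r\<^sup>2 - h\<^sup>2 + k * h\<^sup>2" unfolding kt2 by (simp add: power2_eq_square algebra_simps)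
    also have "\<dots> = 0" unfolding r2 k_def by (simp add: power2_eq_square algebra_simps)
    finally have "xO\<^sup>2 + k * t2\<^sup>2 - 2 * h * t2 + h\<^sup>2 = 0" using k by simp
    then show ?thesis using e1 by simp
  qed
  obtain \<theta> where ex: "\<alpha> * t2 * cos \<theta> = - xO" and ey: "\<alpha> * t2 * sin \<theta> = t2 - h"
  proof (cases "t2 = 0")
    case True
    then have "xO\<^sup>2 + h\<^sup>2 = 0" using Q by simp
    then have "xO = 0" "h = 0" by (simp_all add: sum_power2_eq_zero_iff)
    then show ?thesis using that[of 0] True by simp
  next
    case False
    then have at: "\<alpha> * t2 \<noteq> 0" using a by simp
    have "(- xO / (\<alpha> * t2))\<^sup>2 + ((t2 - h) / (\<alpha> * t2))\<^sup>2 = (xO\<^sup>2 + (t2 - h)\<^sup>2) / (\<alpha> * t2)\<^sup>2"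
      by (simp add: power_divide add_divide_distrib)
    also have "\<dots> = 1" using Q at by (simp add: power_mult_distrib)
    finally obtain th where "- xO / (\<alpha> * t2) = cos th" "(t2 - h) / (\<alpha> * t2) = sin th"
      by (rule sincos_total_2pi)
    then show ?thesis using that[of th] at by (simp add: field_simps)
  qed
  define \<psi> where "\<psi> = (\<lambda>s::real. if s \<le> t2 then \<theta> else pi/2)"
  have psim: "\<psi> \<in> borel_measurable lborel" unfolding \<psi>_def by measurable
  have low: "obs_time \<alpha> R xO yO yT \<psi> = ereal (2 * R / (1 - \<alpha>))"
    unfolding \<psi>_def by (rule lower[OF a R t2 ex]) (use ey h_def in simp)
  show ?thesis unfolding opt_obs_time_def
  proof (rule antisym)
    show "(SUP \<psi> \<in> {\<psi>. \<psi> \<in> borel_measurable lborel}. obs_time \<alpha> R xO yO yT \<psi>) \<le> ereal (2 * R / (1 - \<alpha>))"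
      by (rule SUP_least) (use upper a R in auto)
    show "ereal (2 * R / (1 - \<alpha>)) \<le> (SUP \<psi> \<in> {\<psi>. \<psi> \<in> borel_measurable lborel}. obs_time \<alpha> R xO yO yT \<psi>)"
      unfolding low[symmetric] by (rule SUP_upper) (use psim in simp)
  qed
qed

end
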